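(* Let $G$ be a simple (prop-int, tree)-graph, let $v$ be a pendant vertex of $G$ (a vertex of degree exactly $1$), and let $\widehat{G}$ be obtained from $G$ by attaching a degree-2-tail of length $\ell\ge 1$ at $v$, i.e., adding new vertices $u_1,\dots,u_\ell$ and edges $vu_1$ and $u_iu_{i+1}$ for $1\le i\le \ell-1$. Then $\widehat{G}$ is a simple (prop-int, tree)-graph.
   Context: A simple undirected graph is a (prop-int, tree)-graph if every connected component of it is a proper interval graph or a tree. *)

theory Defs
  imports Complex_Main
begin

definition simple_graph :: "'a set \<Rightarrow> ('a \<Rightarrow> 'a \<Rightarrow> bool) \<Rightarrow> bool" where
  "simple_graph V E \<longleftrightarrow> finite V \<and> (\<forall>x y. E x y \<longrightarrow> x \<in> V \<and> y \<in> V)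
     \<and> (\<forall>x y. E x y \<longrightarrow> E y x) \<and> (\<forall>x. \<not> E x x)"

definition degree :: "'a set \<Rightarrow> ('a \<Rightarrow> 'a \<Rightarrow> bool) \<Rightarrow> 'a \<Rightarrow> nat" where
  "degree V E v = card {w \<in> V. E v w}"

definition induced :: "('a \<Rightarrow> 'a \<Rightarrow> bool) \<Rightarrow> 'a set \<Rightarrow> 'a \<Rightarrow> 'a \<Rightarrow> bool" where
  "induced E C = (\<lambda>x y. E x y \<and> x \<in> C \<and> y \<in> C)"

definition component :: "'a set \<Rightarrow> ('a \<Rightarrow> 'a \<Rightarrow> bool) \<Rightarrow> 'a \<Rightarrow> 'a set" where
  "component V E x = {y \<in> V. E\<^sup>*\<^sup>* x y}"

definition connected_graph :: "'a set \<Rightarrow> ('a \<Rightarrow> 'a \<Rightarrow> bool) \<Rightarrow> bool" where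
  "connected_graph V E \<longleftrightarrow> V \<noteq> {} \<and> (\<forall>x\<in>V. \<forall>y\<in>V. E\<^sup>*\<^sup>* x y)"

definition has_cycle :: "'a set \<Rightarrow> ('a \<Rightarrow> 'a \<Rightarrow> bool) \<Rightarrow> bool" where
  "has_cycle V E \<longleftrightarrow> (\<exists>cs. length cs \<ge> 3 \<and> distinct cs \<and> set cs \<subseteq> V
      \<and> (\<forall>i. Suc i < length cs \<longrightarrow> E (cs ! i) (cs ! Suc i)) \<and> E (last cs) (hd cs))"

definition is_tree :: "'a set \<Rightarrow> ('a \<Rightarrow> 'a \<Rightarrow> bool) \<Rightarrow> bool" where
  "is_tree V E \<longleftrightarrow> connected_graph V E \<and> \<not> has_cycle V E"

definition proper_interval_graph :: "'a set \<Rightarrow> ('a \<Rightarrow> 'a \<Rightarrow> bool) \<Rightarrow> bool" where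
  "proper_interval_graph V E \<longleftrightarrow> (\<exists>l r :: 'a \<Rightarrow> real.
      (\<forall>x\<in>V. l x \<le> r x)
    \<and> (\<forall>x\<in>V. \<forall>y\<in>V. x \<noteq> y \<longrightarrow> (E x y \<longleftrightarrow> l x \<le> r y \<and> l y \<le> r x))
    \<and> (\<forall>x\<in>V. \<forall>y\<in>V. \<not> ({l x..r x} \<subset> {l y..r y})))"

definition propint_tree_graph :: "'a set \<Rightarrow> ('a \<Rightarrow> 'a \<Rightarrow> bool) \<Rightarrow> bool" where
  "propint_tree_graph V E \<longleftrightarrow> (\<forall>x\<in>V. let C = component V E x in
      proper_interval_graph C (induced E C) \<or> is_tree C (induced E C))"

definition tail_vertices :: "(nat \<Rightarrow> 'a) \<Rightarrow> nat \<Rightarrow> 'a set" where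
  "tail_vertices u l = u ` {1..l}"

definition tail_edges :: "('a \<Rightarrow> 'a \<Rightarrow> bool) \<Rightarrow> 'a \<Rightarrow> (nat \<Rightarrow> 'a) \<Rightarrow> nat \<Rightarrow> 'a \<Rightarrow> 'a \<Rightarrow> bool" where
  "tail_edges E v u l = (\<lambda>x y. E x y
      \<or> (x = v \<and> y = u 1) \<or> (x = u 1 \<and> y = v)
      \<or> (\<exists>i. 1 \<le> i \<and> i < l \<and> ((x = u i \<and> y = u (Suc i)) \<or> (x = u (Suc i) \<and> y = u i))))"

end

theory Submission
  imports Defs
begin

lemma rtr_sym:
  assumes "\<And>a b. F a b \<Longrightarrow> F b a" and "F\<^sup>*\<^sup>* x y"
  shows "F\<^sup>*\<^sup>* y x"
  using assms(2)
proof (induction rule: rtranclp_induct)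
  case base then show ?case by simp
next
  case (step y z)
  then show ?case using assms(1) by (meson converse_rtranclp_into_rtranclp)
qed

lemma ivl_psub:
  fixes a b c d :: real
  assumes "a \<le> b"
  shows "({a..b} \<subset> {c..d}) \<longleftrightarrow> (c \<le> a \<and> b \<le> d \<and> (c < a \<or> b < d))"
proof -
  have "{a..b} \<subseteq> {c..d} \<longleftrightarrow> c \<le> a \<and> b \<le> d" using assms by auto
  moreover have "{a..b} = {c..d} \<longleftrightarrow> a = c \<and> b = d" using assms by auto
  ultimately show ?thesis unfolding psubset_eq by auto
qed

lemma rtr_induced:
  assumes "F\<^sup>*\<^sup>* x y"
  shows "(induced F {z. F\<^sup>*\<^sup>* x z})\<^sup>*\<^sup>* x y"
  using assms
proof (induction rule: rtranclp_induct)
  case base then show ?case by simp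
next
  case (step y z)
  then have "induced F {z. F\<^sup>*\<^sup>* x z} y z" unfolding induced_def by auto
  with step show ?case by (meson rtranclp.rtrancl_into_rtrancl)
qed

lemma component_connected:
  assumes edges: "\<And>a b. F a b \<Longrightarrow> a \<in> V \<and> b \<in> V"
    and sym: "\<And>a b. F a b \<Longrightarrow> F b a" and x: "x \<in> V"
  shows "connected_graph (component V F x) (induced F (component V F x))"
proof -
  have eq: "component V F x = {z. F\<^sup>*\<^sup>* x z}"
    unfolding component_def using x edges
    by (auto elim: rtranclp.cases)
  have symI: "\<And>a b. induced F {z. F\<^sup>*\<^sup>* x z} a b \<Longrightarrow> induced F {z. F\<^sup>*\<^sup>* x z} b a"
    unfolding induced_def using sym by auto
  show ?thesis unfolding connected_graph_def eq
  proof (intro conjI ballI)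
    show "{z. F\<^sup>*\<^sup>* x z} \<noteq> {}" by auto
  next
    fix a b assume "a \<in> {z. F\<^sup>*\<^sup>* x z}" "b \<in> {z. F\<^sup>*\<^sup>* x z}"
    then have "(induced F {z. F\<^sup>*\<^sup>* x z})\<^sup>*\<^sup>* x a" "(induced F {z. F\<^sup>*\<^sup>* x z})\<^sup>*\<^sup>* x b"
      using rtr_induced by auto
    moreover have "(induced F {z. F\<^sup>*\<^sup>* x z})\<^sup>*\<^sup>* a x"
      using rtr_sym[where F="induced F {z. F\<^sup>*\<^sup>* x z}"] symI calculation(1) by blast
    ultimately show "(induced F {z. F\<^sup>*\<^sup>* x z})\<^sup>*\<^sup>* a b"
      by (meson rtranclp_trans)
  qed
qed

lemma cycle_nbrs:
  assumes sym: "\<And>a b. F a b \<Longrightarrow> F b a"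
    and len: "length cs \<ge> 3" and dist: "distinct cs"
    and cons: "\<forall>i. Suc i < length cs \<longrightarrow> F (cs ! i) (cs ! Suc i)"
    and cl: "F (last cs) (hd cs)"
    and k: "k < length cs"
  shows "\<exists>a b. a \<in> set cs \<and> b \<in> set cs \<and> a \<noteq> b \<and> F (cs ! k) a \<and> F (cs ! k) b"
proof -
  define n where "n = length cs"
  have ne: "cs \<noteq> []" using len by auto
  have lastn: "last cs = cs ! (n - 1)" using ne unfolding n_def by (simp add: last_conv_nth)
  have hd0: "hd cs = cs ! 0" using ne by (simp add: hd_conv_nth)
  have neq: "\<And>i j. i < n \<Longrightarrow> j < n \<Longrightarrow> i \<noteq> j \<Longrightarrow> cs ! i \<noteq> cs ! j"
    using dist unfolding n_def by (simp add: nth_eq_iff_index_eq)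
  have mem: "\<And>i. i < n \<Longrightarrow> cs ! i \<in> set cs" unfolding n_def by simp
  have cons': "\<And>i. Suc i < n \<Longrightarrow> F (cs ! i) (cs ! Suc i)" using cons unfolding n_def by blast
  have n3: "n \<ge> 3" "k < n" using len k unfolding n_def by auto
  have key: "\<And>a b. a < n \<Longrightarrow> b < n \<Longrightarrow> a \<noteq> b \<Longrightarrow> F (cs ! k) (cs ! a) \<Longrightarrow> F (cs ! k) (cs ! b) \<Longrightarrow> \<exists>a b. a \<in> set cs \<and> b \<in> set cs \<and> a \<noteq> b \<and> F (cs ! k) a \<and> F (cs ! k) b"
    using mem neq by blast
  consider "k = 0" | "k = n - 1" | "0 < k \<and> k < n - 1" using n3 by linarith
  then show ?thesis
  proof cases
    case 1
    have a: "F (cs ! k) (cs ! 1)" using cons'[of 0] n3 1 by simp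
    have b: "F (cs ! k) (cs ! (n - 1))" using cl sym lastn hd0 1 by metis
    show ?thesis by (rule key[OF _ _ _ a b]) (use n3 in auto)
  next
    case 2
    have "F (cs ! (n - 2)) (cs ! Suc (n - 2))" using cons'[of "n - 2"] n3 by simp
    moreover have "Suc (n - 2) = k" using n3 2 by simp
    ultimately have a: "F (cs ! k) (cs ! (n - 2))" using sym by simp
    have b: "F (cs ! k) (cs ! 0)" using cl lastn hd0 2 by simp
    show ?thesis by (rule key[OF _ _ _ a b]) (use n3 in auto)
  next
    case 3
    have a: "F (cs ! k) (cs ! Suc k)" using cons'[of k] 3 by linarith
    have "F (cs ! (k - 1)) (cs ! Suc (k - 1))" using cons'[of "k - 1"] 3 n3 by simp
    then have b: "F (cs ! k) (cs ! (k - 1))" using sym 3 by simp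
    show ?thesis by (rule key[OF _ _ _ a b]) (use n3 3 in auto)
  qed
qed

lemma te_VV:
  assumes sg: "simple_graph V E" and inj: "inj_on u {1..l}" and dj: "u ` {1..l} \<inter> V = {}"
    and "v \<in> V" and a: "a \<in> V" and b: "b \<in> V" and l1: "l \<ge> 1"
  shows "tail_edges E v u l a b \<longleftrightarrow> E a b"
proof -
  have nV: "\<And>i. i \<in> {1..l} \<Longrightarrow> u i \<notin> V" using dj by blast
  then have "\<And>i. 1 \<le> i \<Longrightarrow> i < l \<Longrightarrow> u i \<notin> V \<and> u (Suc i) \<notin> V" by auto
  moreover have "u 1 \<notin> V" using nV l1 by auto
  ultimately show ?thesis unfolding tail_edges_def using a b \<open>v \<in> V\<close> dj by auto
qed

lemma te_VT:
  assumes sg: "simple_graph V E" and inj: "inj_on u {1..l}" and dj: "u ` {1..l} \<inter> V = {}"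
    and "v \<in> V" and a: "a \<in> V" and j: "j \<in> {1..l}"
  shows "tail_edges E v u l a (u j) \<longleftrightarrow> a = v \<and> j = 1"
    and "tail_edges E v u l (u j) a \<longleftrightarrow> a = v \<and> j = 1"
proof -
  have nV: "\<And>i. i \<in> {1..l} \<Longrightarrow> u i \<notin> V" using dj by blast
  have nE: "\<not> E a (u j)" "\<not> E (u j) a" using sg nV[OF j] unfolding simple_graph_def by auto
  have "1 \<in> {1..l}" using j by auto
  have inj1: "u j = u 1 \<longleftrightarrow> j = 1" using inj j \<open>1 \<in> {1..l}\<close> by (meson inj_on_eq_iff)
  have x: "\<And>i. 1 \<le> i \<Longrightarrow> i < l \<Longrightarrow> u i \<noteq> a \<and> u (Suc i) \<noteq> a" using nV a by fastforce
  show "tail_edges E v u l a (u j) \<longleftrightarrow> a = v \<and> j = 1"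
    unfolding tail_edges_def using nE inj1 x nV[OF j] \<open>v \<in> V\<close> a by auto
  show "tail_edges E v u l (u j) a \<longleftrightarrow> a = v \<and> j = 1"
    unfolding tail_edges_def using nE inj1 x nV[OF j] \<open>v \<in> V\<close> a by auto
qed

lemma te_TT:
  assumes sg: "simple_graph V E" and inj: "inj_on u {1..l}" and dj: "u ` {1..l} \<inter> V = {}"
    and "v \<in> V" and i: "i \<in> {1..l}" and j: "j \<in> {1..l}"
  shows "tail_edges E v u l (u i) (u j) \<longleftrightarrow> j = Suc i \<or> i = Suc j"
proof -
  have nV: "\<And>i. i \<in> {1..l} \<Longrightarrow> u i \<notin> V" using dj by blast
  have nE: "\<not> E (u i) (u j)" using sg nV[OF j] unfolding simple_graph_def by auto
  have ne: "u i \<noteq> v" "u j \<noteq> v" using nV i j \<open>v \<in> V\<close> by auto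
  have eq: "\<And>a b. a \<in> {1..l} \<Longrightarrow> b \<in> {1..l} \<Longrightarrow> u a = u b \<longleftrightarrow> a = b"
    using inj by (meson inj_on_eq_iff)
  show ?thesis
  proof
    assume "tail_edges E v u l (u i) (u j)"
    then obtain k where k: "1 \<le> k" "k < l" "(u i = u k \<and> u j = u (Suc k)) \<or> (u i = u (Suc k) \<and> u j = u k)"
      unfolding tail_edges_def using nE ne by auto
    then have "k \<in> {1..l}" "Suc k \<in> {1..l}" by auto
    then show "j = Suc i \<or> i = Suc j" using k(3) eq i j by metis
  next
    assume h: "j = Suc i \<or> i = Suc j"
    show "tail_edges E v u l (u i) (u j)"
    proof (cases "j = Suc i")
      case True
      then show ?thesis unfolding tail_edges_def using i j by auto
    next
      case False
      then have "i = Suc j" using h by auto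
      then show ?thesis unfolding tail_edges_def using i j by auto
    qed
  qed
qed

lemma te_props:
  assumes sg: "simple_graph V E" and inj: "inj_on u {1..l}" and dj: "u ` {1..l} \<inter> V = {}"
    and v: "v \<in> V" and l1: "l \<ge> 1"
  shows "\<And>a b. tail_edges E v u l a b \<Longrightarrow> a \<in> V \<union> u ` {1..l} \<and> b \<in> V \<union> u ` {1..l}"
    and "\<And>a b. tail_edges E v u l a b \<Longrightarrow> tail_edges E v u l b a"
    and "\<And>a. \<not> tail_edges E v u l a a"
    and "\<And>a b. E a b \<Longrightarrow> tail_edges E v u l a b"
proof -
  have EV: "\<And>a b. E a b \<Longrightarrow> a \<in> V \<and> b \<in> V" and Es: "\<And>a b. E a b \<Longrightarrow> E b a"
    and Ei: "\<And>a. \<not> E a a" using sg unfolding simple_graph_def by blast+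
  have u1: "u 1 \<in> u ` {1..l}" using l1 by auto
  have ui: "\<And>i. 1 \<le> i \<Longrightarrow> i < l \<Longrightarrow> u i \<in> u ` {1..l} \<and> u (Suc i) \<in> u ` {1..l}" by auto
  show "\<And>a b. tail_edges E v u l a b \<Longrightarrow> a \<in> V \<union> u ` {1..l} \<and> b \<in> V \<union> u ` {1..l}"
  proof -
    fix a b assume "tail_edges E v u l a b"
    then consider "E a b" | "a = v \<and> b = u 1" | "a = u 1 \<and> b = v"
      | i where "1 \<le> i" "i < l" "(a = u i \<and> b = u (Suc i)) \<or> (a = u (Suc i) \<and> b = u i)"
      unfolding tail_edges_def by blast
    then show "a \<in> V \<union> u ` {1..l} \<and> b \<in> V \<union> u ` {1..l}"
    proof cases
      case 1 then show ?thesis using EV by blast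
    next
      case 2 then show ?thesis using v u1 by blast
    next
      case 3 then show ?thesis using v u1 by blast
    next
      case (4 i) then show ?thesis using ui[of i] by blast
    qed
  qed
  show "\<And>a b. tail_edges E v u l a b \<Longrightarrow> tail_edges E v u l b a"
    unfolding tail_edges_def using Es by blast
  show "\<And>a b. E a b \<Longrightarrow> tail_edges E v u l a b" unfolding tail_edges_def by blast
  fix a
  show "\<not> tail_edges E v u l a a"
  proof
    assume h: "tail_edges E v u l a a"
    then consider "E a a" | "a = v \<and> a = u 1"
      | i where "1 \<le> i" "i < l" "a = u i" "a = u (Suc i)"
      unfolding tail_edges_def by blast
    then show False
    proof cases
      case 1 then show ?thesis using Ei by blast
    next
      case 2 then show ?thesis using v u1 dj by blast
    next
      case (3 i)
      then have "i \<in> {1..l}" "Suc i \<in> {1..l}" by auto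
      then show ?thesis using 3 inj by (metis inj_on_eq_iff n_not_Suc_n)
    qed
  qed
qed

lemma comp_new:
  assumes sg: "simple_graph V E" and inj: "inj_on u {1..l}" and dj: "u ` {1..l} \<inter> V = {}"
    and v: "v \<in> V" and l1: "l \<ge> 1"
    and x: "x \<in> component V E v \<union> u ` {1..l}"
  shows "component (V \<union> u ` {1..l}) (tail_edges E v u l) x = component V E v \<union> u ` {1..l}"
proof -
  let ?F = "tail_edges E v u l" and ?T = "u ` {1..l}" and ?C = "component V E v"
  note P = te_props[OF sg inj dj v l1]
  have r1: "?F\<^sup>*\<^sup>* v y" if "y \<in> ?C" for y
  proof -
    have "E\<^sup>*\<^sup>* v y" using that unfolding component_def by auto
    then show ?thesis using mono_rtranclp[of E ?F] P(4) by blast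
  qed
  have r2: "i \<in> {1..l} \<Longrightarrow> ?F\<^sup>*\<^sup>* v (u i)" for i
  proof (induction i)
    case 0 then show ?case by auto
  next
    case (Suc i)
    show ?case
    proof (cases "i = 0")
      case True
      then have "?F v (u (Suc i))" unfolding tail_edges_def by auto
      then show ?thesis by auto
    next
      case False
      then have il: "1 \<le> i \<and> i < l" "i \<in> {1..l}" using Suc.prems by auto
      then have "?F (u i) (u (Suc i))" unfolding tail_edges_def by blast
      then show ?thesis using Suc.IH il by (meson rtranclp.rtrancl_into_rtrancl)
    qed
  qed
  have r3: "?F\<^sup>*\<^sup>* v y \<Longrightarrow> y \<in> ?C \<union> ?T" for y
  proof (induction rule: rtranclp_induct)
    case base then show ?case using v unfolding component_def by auto
  next
    case (step y z)
    have z: "z \<in> V \<union> ?T" using P(1)[OF step(2)] by auto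
    show ?case
    proof (cases "z \<in> ?T")
      case True then show ?thesis by auto
    next
      case False
      then have zV: "z \<in> V" using z by auto
      show ?thesis
      proof (cases "y \<in> ?C")
        case True
        then have yV: "y \<in> V" "E\<^sup>*\<^sup>* v y" unfolding component_def by auto
        then have "E y z" using te_VV[OF sg inj dj v yV(1) zV l1] step(2) by auto
        then have "E\<^sup>*\<^sup>* v z" using yV(2) by (meson rtranclp.rtrancl_into_rtrancl)
        then show ?thesis using zV unfolding component_def by blast
      next
        case False
        then obtain j where j: "j \<in> {1..l}" "y = u j" using step(3) by auto
        then have "z = v" using te_VT(2)[OF sg inj dj v zV j(1)] step(2) by auto
        then show ?thesis using v unfolding component_def by auto
      qed
    qed
  qed
  have vx: "?F\<^sup>*\<^sup>* v x" using x r1 r2 by auto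
  have xv: "?F\<^sup>*\<^sup>* x v" using rtr_sym[where F="?F"] P(2) vx by blast
  have CV: "?C \<subseteq> V" unfolding component_def by auto
  show ?thesis
  proof (intro set_eqI iffI)
    fix y assume "y \<in> component (V \<union> ?T) ?F x"
    then have "?F\<^sup>*\<^sup>* x y" unfolding component_def by auto
    then have "?F\<^sup>*\<^sup>* v y" using vx by (meson rtranclp_trans)
    then show "y \<in> ?C \<union> ?T" using r3 by blast
  next
    fix y assume y: "y \<in> ?C \<union> ?T"
    then have "?F\<^sup>*\<^sup>* v y" using r1 r2 by auto
    then have "?F\<^sup>*\<^sup>* x y" using xv by (meson rtranclp_trans)
    moreover have "y \<in> V \<union> ?T" using y CV by blast
    ultimately show "y \<in> component (V \<union> ?T) ?F x" unfolding component_def by blast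
  qed
qed


lemma comp_old:
  assumes sg: "simple_graph V E" and inj: "inj_on u {1..l}" and dj: "u ` {1..l} \<inter> V = {}"
    and v: "v \<in> V" and l1: "l \<ge> 1"
    and x: "x \<in> V" "x \<notin> component V E v"
  shows "component (V \<union> u ` {1..l}) (tail_edges E v u l) x = component V E x"
    and "induced (tail_edges E v u l) (component V E x) = induced E (component V E x)"
proof -
  let ?F = "tail_edges E v u l" and ?T = "u ` {1..l}"
  note P = te_props[OF sg inj dj v l1]
  have Esym: "\<And>a b. E a b \<Longrightarrow> E b a" using sg unfolding simple_graph_def by auto
  have EV: "\<And>a b. E a b \<Longrightarrow> a \<in> V \<and> b \<in> V" using sg unfolding simple_graph_def by auto
  have nv: "\<not> E\<^sup>*\<^sup>* x v"
  proof
    assume "E\<^sup>*\<^sup>* x v"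
    then have "E\<^sup>*\<^sup>* v x" using rtr_sym[where F=E] Esym by blast
    then show False using x unfolding component_def by auto
  qed
  have inV: "E\<^sup>*\<^sup>* x y \<Longrightarrow> y \<in> V" for y
    by (induction rule: rtranclp_induct) (use x EV in auto)
  have a: "?F\<^sup>*\<^sup>* x y \<Longrightarrow> E\<^sup>*\<^sup>* x y" for y
  proof (induction rule: rtranclp_induct)
    case base then show ?case by auto
  next
    case (step y z)
    have yV: "y \<in> V" using inV step(3) by auto
    have yv: "y \<noteq> v" using nv step(3) by auto
    have "z \<in> V"
    proof (rule ccontr)
      assume "z \<notin> V"
      then obtain j where "j \<in> {1..l}" "z = u j" using P(1)[OF step(2)] by auto
      then show False using te_VT(1)[OF sg inj dj v yV] step(2) yv by auto
    qed
    then have "E y z" using te_VV[OF sg inj dj v yV _ l1] step(2) by auto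
    then show ?case using step(3) by (meson rtranclp.rtrancl_into_rtrancl)
  qed
  have b: "E\<^sup>*\<^sup>* x y \<Longrightarrow> ?F\<^sup>*\<^sup>* x y" for y
  proof -
    assume "E\<^sup>*\<^sup>* x y"
    then show ?thesis using mono_rtranclp[of E ?F] P(4) by blast
  qed
  show "component (V \<union> ?T) ?F x = component V E x"
    unfolding component_def using a b inV by auto
  show "induced ?F (component V E x) = induced E (component V E x)"
  proof (intro ext)
    fix p q
    show "induced ?F (component V E x) p q = induced E (component V E x) p q"
      unfolding induced_def using te_VV[OF sg inj dj v _ _ l1, of p q]
      unfolding component_def by auto
  qed
qed

lemma tree_ext:
  assumes sg: "simple_graph V E" and inj: "inj_on u {1..l}" and dj: "u ` {1..l} \<inter> V = {}"
    and v: "v \<in> V" and l1: "l \<ge> 1"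
    and tr: "is_tree (component V E v) (induced E (component V E v))"
  shows "is_tree (component V E v \<union> u ` {1..l}) (induced (tail_edges E v u l) (component V E v \<union> u ` {1..l}))"
proof -
  let ?F = "tail_edges E v u l" and ?T = "u ` {1..l}" and ?C = "component V E v"
  let ?G = "induced ?F (?C \<union> ?T)"
  note P = te_props[OF sg inj dj v l1]
  have vC: "v \<in> ?C" using v unfolding component_def by auto
  have CV: "?C \<subseteq> V" unfolding component_def by auto
  have eqc: "component (V \<union> ?T) ?F v = ?C \<union> ?T" using comp_new[OF sg inj dj v l1] vC by blast
  have conn: "connected_graph (?C \<union> ?T) ?G"
    using component_connected[of ?F "V \<union> ?T" v] P(1) P(2) v eqc by auto
  have nc: "\<not> has_cycle (?C \<union> ?T) ?G"
  proof
    assume "has_cycle (?C \<union> ?T) ?G"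
    then obtain cs where len: "length cs \<ge> 3" and dist: "distinct cs" and sub: "set cs \<subseteq> ?C \<union> ?T"
      and cons: "\<forall>i. Suc i < length cs \<longrightarrow> ?G (cs ! i) (cs ! Suc i)" and cl: "?G (last cs) (hd cs)"
      unfolding has_cycle_def by blast
    have Gsym: "\<And>a b. ?G a b \<Longrightarrow> ?G b a" using P(2) unfolding induced_def by blast
    show False
    proof (cases "set cs \<inter> ?T = {}")
      case True
      then have sub2: "set cs \<subseteq> ?C" using sub by blast
      have GE: "\<And>a b. a \<in> set cs \<Longrightarrow> b \<in> set cs \<Longrightarrow> ?G a b \<Longrightarrow> induced E ?C a b"
      proof -
        fix a b assume ab: "a \<in> set cs" "b \<in> set cs" "?G a b"
        then have "a \<in> ?C" "b \<in> ?C" using sub2 by auto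
        moreover then have "?F a b \<longleftrightarrow> E a b" using te_VV[OF sg inj dj v _ _ l1] CV by blast
        ultimately show "induced E ?C a b" using ab(3) unfolding induced_def by blast
      qed
      have ne: "cs \<noteq> []" using len by auto
      have "has_cycle ?C (induced E ?C)"
        unfolding has_cycle_def
      proof (intro exI conjI allI impI)
        show "3 \<le> length cs" "distinct cs" "set cs \<subseteq> ?C" using len dist sub2 by auto
        fix i assume i: "Suc i < length cs"
        then show "induced E ?C (cs ! i) (cs ! Suc i)" using GE cons by simp
      next
        show "induced E ?C (last cs) (hd cs)" using GE cl ne by simp
      qed
      then show False using tr unfolding is_tree_def by blast
    next
      case False
      define J where "J = {i \<in> {1..l}. u i \<in> set cs}"
      have Jne: "J \<noteq> {}" using False unfolding J_def by blast
      have Jfin: "finite J" unfolding J_def by auto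
      define j where "j = Max J"
      have jJ: "j \<in> J" using Jne Jfin unfolding j_def by simp
      have jmax: "\<And>i. i \<in> J \<Longrightarrow> i \<le> j" using Jfin unfolding j_def by simp
      have jl: "j \<in> {1..l}" "u j \<in> set cs" using jJ unfolding J_def by auto
      obtain k where k: "k < length cs" "cs ! k = u j" using jl(2) by (meson in_set_conv_nth)
      obtain a b where ab: "a \<in> set cs" "b \<in> set cs" "a \<noteq> b" "?G (u j) a" "?G (u j) b"
        using cycle_nbrs[of ?G cs k, OF Gsym len dist cons cl k(1)] k(2) by auto
      have nb: "c = (if j = 1 then v else u (j - 1))" if c: "c \<in> set cs" "?G (u j) c" for c
      proof -
        have "c \<in> V \<union> ?T" using P(1) c(2) unfolding induced_def by blast
        then show ?thesis
        proof
          assume cV: "c \<in> V"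
          then show ?thesis using te_VT(2)[OF sg inj dj v cV jl(1)] c(2) unfolding induced_def by auto
        next
          assume "c \<in> ?T"
          then obtain i where i: "i \<in> {1..l}" "c = u i" by blast
          then have "i = Suc j \<or> j = Suc i" using te_TT[OF sg inj dj v jl(1) i(1)] c(2) unfolding induced_def by auto
          moreover have "i \<in> J" using i c(1) unfolding J_def by auto
          ultimately have "j = Suc i" using jmax by fastforce
          then show ?thesis using i by auto
        qed
      qed
      show False using nb[OF ab(1) ab(4)] nb[OF ab(2) ab(5)] ab(3) by simp
    qed
  qed
  show ?thesis unfolding is_tree_def using conn nc by blast
qed

lemma pi_ext:
  fixes lf rf :: "'a \<Rightarrow> real"
  assumes sg: "simple_graph V E" and inj: "inj_on u {1..l}" and dj: "u ` {1..l} \<inter> V = {}"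
    and v: "v \<in> V" and l1: "l \<ge> 1"
    and w: "w \<in> component V E v" "E v w" "w \<noteq> v"
    and only: "\<And>y. E v y \<Longrightarrow> y = w"
    and r1: "\<And>x. x \<in> component V E v \<Longrightarrow> lf x \<le> rf x"
    and r2: "\<And>x y. x \<in> component V E v \<Longrightarrow> y \<in> component V E v \<Longrightarrow> x \<noteq> y \<Longrightarrow>
        (E x y \<longleftrightarrow> lf x \<le> rf y \<and> lf y \<le> rf x)"
    and r3: "\<And>x y. x \<in> component V E v \<Longrightarrow> y \<in> component V E v \<Longrightarrow>
        \<not> (lf y \<le> lf x \<and> rf x \<le> rf y \<and> (lf y < lf x \<or> rf x < rf y))"
    and ord: "lf w \<le> lf v"
    and other: "\<exists>x\<in>component V E v. x \<noteq> v \<and> x \<noteq> w"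
  shows "proper_interval_graph (component V E v \<union> u ` {1..l})
           (induced (tail_edges E v u l) (component V E v \<union> u ` {1..l}))"
proof -
  let ?F = "tail_edges E v u l" and ?T = "u ` {1..l}" and ?C = "component V E v"
  have CV: "?C \<subseteq> V" unfolding component_def by auto
  have vC: "v \<in> ?C" using v unfolding component_def by auto
  have EV: "\<And>a b. E a b \<Longrightarrow> a \<in> V \<and> b \<in> V" and Es: "\<And>a b. E a b \<Longrightarrow> E b a"
    and Ei: "\<And>a. \<not> E a a" using sg unfolding simple_graph_def by blast+
  have rw: "rf w \<le> rf v" using r3[OF vC w(1)] ord by linarith
  have reachV: "E\<^sup>*\<^sup>* v y \<Longrightarrow> y \<in> V" for y
    by (induction rule: rtranclp_induct) (use v EV in auto)
  have reach: "E\<^sup>*\<^sup>* v y \<Longrightarrow> y \<in> ?C" for y using reachV unfolding component_def by blast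
  have noright: "E\<^sup>*\<^sup>* v y \<Longrightarrow> \<not> rf v < lf y" for y
  proof (induction rule: rtranclp_induct)
    case base then show ?case using r1[OF vC] by linarith
  next
    case (step y z)
    have yC: "y \<in> ?C" using reach step(1) by blast
    have zC: "z \<in> ?C" using reach step(1) step(2) by (meson rtranclp.rtrancl_into_rtrancl)
    have yz: "y \<noteq> z" using Ei step(2) by blast
    have e: "lf z \<le> rf y" using r2[OF yC zC yz] step(2) by blast
    show ?case
    proof
      assume rz: "rf v < lf z"
      consider "y = v" | "y = w" | "y \<noteq> v" "y \<noteq> w" by blast
      then show False
      proof cases
        case 1 then show ?thesis using e rz by simp
      next
        case 2 then show ?thesis using e rz rw by simp
      next
        case 3
        then have "\<not> E v y" using only by blast
        then have "\<not> (lf v \<le> rf y \<and> lf y \<le> rf v)" using r2[OF vC yC] 3 by auto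
        then show ?thesis using step(3) e rz r1[OF vC] by linarith
      qed
    qed
  qed
  have left: "rf x < lf v" if x: "x \<in> ?C" "x \<noteq> v" "x \<noteq> w" for x
  proof -
    have "\<not> E v x" using only x by blast
    then have "\<not> (lf v \<le> rf x \<and> lf x \<le> rf v)" using r2[OF vC x(1)] x by auto
    moreover have "\<not> rf v < lf x" using noright x(1) unfolding component_def by blast
    ultimately show ?thesis by linarith
  qed
  have strict: "lf w < lf v"
  proof (rule ccontr)
    assume "\<not> lf w < lf v"
    then have eq: "lf w = lf v" using ord by simp
    have "E\<^sup>*\<^sup>* v y \<Longrightarrow> y = v \<or> y = w" for y
    proof (induction rule: rtranclp_induct)
      case base then show ?case by simp
    next
      case (step y z)
      show ?case
      proof (cases "y = v")
        case True then show ?thesis using only step(2) by blast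
      next
        case False
        then have yw: "y = w" using step(3) by blast
        show ?thesis
        proof (rule ccontr)
          assume nz: "\<not> (z = v \<or> z = w)"
          have zC: "z \<in> ?C" using reach step(1) step(2) by (meson rtranclp.rtrancl_into_rtrancl)
          have "rf z < lf v" using left[OF zC] nz by blast
          moreover have "lf w \<le> rf z" using r2[OF w(1) zC] step(2) yw nz by blast
          ultimately show False using eq by simp
        qed
      qed
    qed
    then show False using other unfolding component_def by blast
  qed
  have rle: "rf x \<le> rf v" if "x \<in> ?C" for x
  proof -
    consider "x = v" | "x = w" | "x \<noteq> v" "x \<noteq> w" by blast
    then show ?thesis
    proof cases
      case 3 then show ?thesis using left[OF that] r1[OF vC] by linarith
    qed (use rw in auto)
  qed
  define idx where "idx = inv_into {1..l} u"
  have idx: "\<And>i. i \<in> {1..l} \<Longrightarrow> idx (u i) = i" unfolding idx_def using inj by (simp add: inv_into_f_f)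
  define lf' where "lf' x = (if x \<in> ?T then rf v + real (idx x) else lf x)" for x
  define rf' where "rf' x = (if x \<in> ?T then rf v + real (idx x) + 1 else if x = v then rf v + 1 else rf x)" for x
  have CT: "\<And>x. x \<in> ?C \<Longrightarrow> x \<notin> ?T" using CV dj by blast
  have lC: "\<And>x. x \<in> ?C \<Longrightarrow> lf' x = lf x" unfolding lf'_def using CT by auto
  have rC: "\<And>x. x \<in> ?C \<Longrightarrow> rf' x = (if x = v then rf v + 1 else rf x)" unfolding rf'_def using CT by auto
  have lT: "\<And>i. i \<in> {1..l} \<Longrightarrow> lf' (u i) = rf v + real i" unfolding lf'_def using idx by auto
  have rT: "\<And>i. i \<in> {1..l} \<Longrightarrow> rf' (u i) = rf v + real i + 1" unfolding rf'_def using idx by auto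
  have ind: "\<And>a b. a \<in> ?C \<union> ?T \<Longrightarrow> b \<in> ?C \<union> ?T \<Longrightarrow> induced ?F (?C \<union> ?T) a b \<longleftrightarrow> ?F a b"
    unfolding induced_def by blast
  have split: "\<And>x. x \<in> ?C \<union> ?T \<Longrightarrow> x \<in> ?C \<or> (\<exists>i\<in>{1..l}. x = u i)" by blast
  have c1: "lf' x \<le> rf' x" if "x \<in> ?C \<union> ?T" for x
    using split[OF that] lC rC lT rT r1 r1[OF vC] by auto
  have c2: "?F x y \<longleftrightarrow> lf' x \<le> rf' y \<and> lf' y \<le> rf' x"
    if x: "x \<in> ?C \<union> ?T" and y: "y \<in> ?C \<union> ?T" and xy: "x \<noteq> y" for x y
  proof -
    consider "x \<in> ?C" "y \<in> ?C" | j where "x \<in> ?C" "j \<in> {1..l}" "y = u j"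
      | i where "i \<in> {1..l}" "x = u i" "y \<in> ?C" | i j where "i \<in> {1..l}" "x = u i" "j \<in> {1..l}" "y = u j"
      using split[OF x] split[OF y] by blast
    then show ?thesis
    proof cases
      case 1
      have FE: "?F x y \<longleftrightarrow> E x y" using te_VV[OF sg inj dj v _ _ l1] 1 CV by blast
      consider "x = v" "y = w" | "x = w" "y = v" | "x = v" "y \<noteq> w" | "y = v" "x \<noteq> w" | "x \<noteq> v" "y \<noteq> v"
        using xy by blast
      then show ?thesis
      proof cases
        case 1
        then show ?thesis using FE w r2[OF vC w(1)] lC[OF vC] lC[OF w(1)] rC[OF vC] rC[OF w(1)] by auto
      next
        case 2
        then show ?thesis using FE w Es r2[OF vC w(1)] lC[OF vC] lC[OF w(1)] rC[OF vC] rC[OF w(1)] by auto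
      next
        case 3
        have "\<not> E x y" using only 3 by blast
        moreover have "rf y < lf v" using left 3 \<open>y \<in> ?C\<close> xy by blast
        ultimately show ?thesis using FE 3 lC rC \<open>y \<in> ?C\<close> xy vC by auto
      next
        case 4
        have "\<not> E x y" using only 4 Es by blast
        moreover have "rf x < lf v" using left 4 \<open>x \<in> ?C\<close> xy by blast
        ultimately show ?thesis using FE 4 lC rC \<open>x \<in> ?C\<close> xy vC by auto
      next
        case 5
        then show ?thesis using FE r2 1 xy lC rC by auto
      qed
    next
      case 2
      have FE: "?F x y \<longleftrightarrow> x = v \<and> j = 1" using te_VT(1)[OF sg inj dj v _ 2(2)] 2 CV by blast
      have j1: "real j \<ge> 1" using 2 by auto
      show ?thesis
      proof (cases "x = v")
        case True
        then show ?thesis using FE lT[OF 2(2)] rT[OF 2(2)] lC rC vC r1[OF vC] j1 2(3) by auto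
      next
        case False
        then show ?thesis using FE lT[OF 2(2)] rT[OF 2(2)] lC[OF 2(1)] rC[OF 2(1)] rle[OF 2(1)] j1 2(3) by auto
      qed
    next
      case 3
      have FE: "?F x y \<longleftrightarrow> y = v \<and> i = 1" using te_VT(2)[OF sg inj dj v _ 3(1)] 3 CV by blast
      have j1: "real i \<ge> 1" using 3 by auto
      show ?thesis
      proof (cases "y = v")
        case True
        then show ?thesis using FE lT[OF 3(1)] rT[OF 3(1)] lC rC vC r1[OF vC] j1 3(2) by auto
      next
        case False
        then show ?thesis using FE lT[OF 3(1)] rT[OF 3(1)] lC[OF 3(3)] rC[OF 3(3)] rle[OF 3(3)] j1 3(2) by auto
      qed
    next
      case 4
      have FE: "?F x y \<longleftrightarrow> j = Suc i \<or> i = Suc j" using te_TT[OF sg inj dj v 4(1) 4(3)] 4 by blast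
      have "i \<noteq> j" using 4 xy by blast
      then have "(j = Suc i \<or> i = Suc j) \<longleftrightarrow> (real i \<le> real j + 1 \<and> real j \<le> real i + 1)" by linarith
      then show ?thesis using FE lT[OF 4(1)] rT[OF 4(1)] lT[OF 4(3)] rT[OF 4(3)] 4 by auto
    qed
  qed
  have c3: "\<not> {lf' x..rf' x} \<subset> {lf' y..rf' y}"
    if x: "x \<in> ?C \<union> ?T" and y: "y \<in> ?C \<union> ?T" for x y
  proof -
    have sub: "({lf' x..rf' x} \<subset> {lf' y..rf' y}) \<longleftrightarrow> (lf' y \<le> lf' x \<and> rf' x \<le> rf' y \<and> (lf' y < lf' x \<or> rf' x < rf' y))"
      using ivl_psub c1[OF x] by blast
    consider "x \<in> ?C" "y \<in> ?C" | j where "x \<in> ?C" "j \<in> {1..l}" "y = u j"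
      | i where "i \<in> {1..l}" "x = u i" "y \<in> ?C" | i j where "i \<in> {1..l}" "x = u i" "j \<in> {1..l}" "y = u j"
      using split[OF x] split[OF y] by blast
    then show ?thesis
    proof cases
      case 1
      consider "x = v" "y = v" | "x = v" "y \<noteq> v" | "x \<noteq> v" "y = v" "x = w" | "x \<noteq> v" "y = v" "x \<noteq> w"
        | "x \<noteq> v" "y \<noteq> v" by blast
      then show ?thesis
      proof cases
        case 1 then show ?thesis by simp
      next
        case 2
        have "rf y \<le> rf v" using rle \<open>y \<in> ?C\<close> by blast
        then show ?thesis unfolding sub using lC[OF \<open>x \<in> ?C\<close>] rC[OF \<open>x \<in> ?C\<close>] rC[OF \<open>y \<in> ?C\<close>] 2 by auto
      next
        case 3 then show ?thesis unfolding sub using lC rC 1 strict by auto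
      next
        case 4 then show ?thesis unfolding sub using lC rC 1 left r1 by fastforce
      next
        case 5 then show ?thesis unfolding sub using lC rC 1 r3 by auto
      qed
    next
      case 2
      have j1: "real j \<ge> 1" using 2 by auto
      show ?thesis unfolding sub using lT[OF 2(2)] rT[OF 2(2)] lC[OF 2(1)] rC[OF 2(1)] rle[OF 2(1)] r1[OF 2(1)] r1[OF vC] j1 2(3)
        by (auto split: if_splits)
    next
      case 3
      have j1: "real i \<ge> 1" using 3 by auto
      show ?thesis unfolding sub using lT[OF 3(1)] rT[OF 3(1)] lC[OF 3(3)] rC[OF 3(3)] rle[OF 3(3)] j1 3(2)
        by (auto split: if_splits)
    next
      case 4
      then show ?thesis unfolding sub using lT[OF 4(1)] rT[OF 4(1)] lT[OF 4(3)] rT[OF 4(3)] by auto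
    qed
  qed
  have c2': "\<forall>x\<in>?C \<union> ?T. \<forall>y\<in>?C \<union> ?T. x \<noteq> y \<longrightarrow>
      (induced ?F (?C \<union> ?T) x y \<longleftrightarrow> lf' x \<le> rf' y \<and> lf' y \<le> rf' x)"
    using c2 ind by blast
  show ?thesis unfolding proper_interval_graph_def
    apply (rule exI[of _ lf'], rule exI[of _ rf'])
    using c1 c2' c3 by blast
qed

theorem lemma10:
  fixes V :: "'a set" and E :: "'a \<Rightarrow> 'a \<Rightarrow> bool" and v :: 'a and u :: "nat \<Rightarrow> 'a" and l :: nat
  assumes "simple_graph V E"
    and "propint_tree_graph V E"
    and "v \<in> V" and "degree V E v = 1"
    and "l \<ge> 1"
    and "inj_on u {1..l}"
    and "u ` {1..l} \<inter> V = {}"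
  shows "simple_graph (V \<union> tail_vertices u l) (tail_edges E v u l)
    \<and> propint_tree_graph (V \<union> tail_vertices u l) (tail_edges E v u l)"
proof -
  note sg = assms(1) and pt = assms(2) and v = assms(3) and deg = assms(4) and l1 = assms(5)
    and inj = assms(6) and dj = assms(7)
  let ?F = "tail_edges E v u l" and ?T = "u ` {1..l}" and ?C = "component V E v"
  note P = te_props[OF sg inj dj v l1]
  have EV: "\<And>a b. E a b \<Longrightarrow> a \<in> V \<and> b \<in> V" and Es: "\<And>a b. E a b \<Longrightarrow> E b a"
    and Ei: "\<And>a. \<not> E a a" and fin: "finite V" using sg unfolding simple_graph_def by blast+
  have TV: "tail_vertices u l = ?T" unfolding tail_vertices_def by simp
  have finT: "finite (V \<union> ?T)" using fin by simp
  have s1: "simple_graph (V \<union> ?T) ?F"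
    unfolding simple_graph_def using finT P(1) P(2) P(3) by meson
  obtain w where w1: "{y \<in> V. E v y} = {w}" using deg unfolding degree_def by (meson card_1_singletonE)
  have wE: "E v w" "w \<in> V" using w1 by blast+
  have only: "\<And>y. E v y \<Longrightarrow> y = w" using w1 EV by blast
  have wv: "w \<noteq> v" using wE Ei by blast
  have vC: "v \<in> ?C" using v unfolding component_def by auto
  have wC: "w \<in> ?C" using wE unfolding component_def by auto
  have CV: "?C \<subseteq> V" unfolding component_def by auto
  have hv: "proper_interval_graph ?C (induced E ?C) \<or> is_tree ?C (induced E ?C)"
    using pt v unfolding propint_tree_graph_def Let_def by blast
  have main: "proper_interval_graph (?C \<union> ?T) (induced ?F (?C \<union> ?T)) \<or> is_tree (?C \<union> ?T) (induced ?F (?C \<union> ?T))"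
  proof (cases "is_tree ?C (induced E ?C)")
    case True
    then show ?thesis using tree_ext[OF sg inj dj v l1] by blast
  next
    case False
    then have "proper_interval_graph ?C (induced E ?C)" using hv by blast
    then obtain lf rf :: "'a \<Rightarrow> real" where
      q1: "\<forall>x\<in>?C. lf x \<le> rf x" and
      q2: "\<forall>x\<in>?C. \<forall>y\<in>?C. x \<noteq> y \<longrightarrow> (induced E ?C x y \<longleftrightarrow> lf x \<le> rf y \<and> lf y \<le> rf x)" and
      q3: "\<forall>x\<in>?C. \<forall>y\<in>?C. \<not> ({lf x..rf x} \<subset> {lf y..rf y})"
      unfolding proper_interval_graph_def by blast
    have r1: "\<And>x. x \<in> ?C \<Longrightarrow> lf x \<le> rf x" using q1 by blast
    have r2: "\<And>x y. x \<in> ?C \<Longrightarrow> y \<in> ?C \<Longrightarrow> x \<noteq> y \<Longrightarrow> (E x y \<longleftrightarrow> lf x \<le> rf y \<and> lf y \<le> rf x)"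
      using q2 unfolding induced_def by blast
    have r3: "\<And>x y. x \<in> ?C \<Longrightarrow> y \<in> ?C \<Longrightarrow> \<not> (lf y \<le> lf x \<and> rf x \<le> rf y \<and> (lf y < lf x \<or> rf x < rf y))"
    proof -
      fix x y assume xy: "x \<in> ?C" "y \<in> ?C"
      have "\<not> ({lf x..rf x} \<subset> {lf y..rf y})" using q3 xy by blast
      then show "\<not> (lf y \<le> lf x \<and> rf x \<le> rf y \<and> (lf y < lf x \<or> rf x < rf y))"
        using ivl_psub[OF r1[OF xy(1)], of "lf y" "rf y"] by simp
    qed
    show ?thesis
    proof (cases "\<exists>x\<in>?C. x \<noteq> v \<and> x \<noteq> w")
      case True
      show ?thesis
      proof (cases "lf w \<le> lf v")
        case True
        show ?thesis using pi_ext[OF sg inj dj v l1 wC wE(1) wv only r1 r2 r3 True] \<open>\<exists>x\<in>?C. x \<noteq> v \<and> x \<noteq> w\<close> by blast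
      next
        case False
        have o: "- rf w \<le> - rf v" using r3[OF wC vC] False by linarith
        have r1': "\<And>x. x \<in> ?C \<Longrightarrow> - rf x \<le> - lf x" using r1 by simp
        have r2': "\<And>x y. x \<in> ?C \<Longrightarrow> y \<in> ?C \<Longrightarrow> x \<noteq> y \<Longrightarrow> (E x y \<longleftrightarrow> - rf x \<le> - lf y \<and> - rf y \<le> - lf x)"
        proof -
          fix x y assume xy: "x \<in> ?C" "y \<in> ?C" "x \<noteq> y"
          have "(- rf x \<le> - lf y \<and> - rf y \<le> - lf x) \<longleftrightarrow> (lf x \<le> rf y \<and> lf y \<le> rf x)" by linarith
          then show "(E x y \<longleftrightarrow> - rf x \<le> - lf y \<and> - rf y \<le> - lf x)" using r2[OF xy] by simp
        qed
        have r3': "\<And>x y. x \<in> ?C \<Longrightarrow> y \<in> ?C \<Longrightarrow> \<not> (- rf y \<le> - rf x \<and> - lf x \<le> - lf y \<and> (- rf y < - rf x \<or> - lf x < - lf y))"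
        proof -
          fix x y assume xy: "x \<in> ?C" "y \<in> ?C"
          show "\<not> (- rf y \<le> - rf x \<and> - lf x \<le> - lf y \<and> (- rf y < - rf x \<or> - lf x < - lf y))"
            using r3[OF xy] by linarith
        qed
        show ?thesis using pi_ext[of V E u l v w "\<lambda>x. - rf x" "\<lambda>x. - lf x", OF sg inj dj v l1 wC wE(1) wv only r1' r2' r3' o]
            \<open>\<exists>x\<in>?C. x \<noteq> v \<and> x \<noteq> w\<close> by blast
      qed
    next
      case False
      then have Cvw: "?C \<subseteq> {v, w}" by blast
      have "is_tree ?C (induced E ?C)"
        unfolding is_tree_def
      proof
        show "connected_graph ?C (induced E ?C)" using component_connected[of E V v] EV Es v by blast
        show "\<not> has_cycle ?C (induced E ?C)"
        proof
          assume "has_cycle ?C (induced E ?C)"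
          then obtain cs where "length cs \<ge> 3" "distinct cs" "set cs \<subseteq> ?C" unfolding has_cycle_def by blast
          then have c3: "card (set cs) \<ge> 3" using distinct_card by metis
          have "set cs \<subseteq> {v, w}" using Cvw \<open>set cs \<subseteq> ?C\<close> by blast
          then have "card (set cs) \<le> card {v, w}" by (simp add: card_mono)
          moreover have "card {v, w} \<le> 2" by (simp add: card_insert_le_m1)
          ultimately show False using c3 by linarith
        qed
      qed
      then show ?thesis using tree_ext[OF sg inj dj v l1] by blast
    qed
  qed
  have s2: "propint_tree_graph (V \<union> ?T) ?F"
    unfolding propint_tree_graph_def Let_def
  proof
    fix x assume x: "x \<in> V \<union> ?T"
    show "proper_interval_graph (component (V \<union> ?T) ?F x) (induced ?F (component (V \<union> ?T) ?F x)) \<or>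
          is_tree (component (V \<union> ?T) ?F x) (induced ?F (component (V \<union> ?T) ?F x))"
    proof (cases "x \<in> ?C \<union> ?T")
      case True
      then show ?thesis using comp_new[OF sg inj dj v l1 True] main by simp
    next
      case False
      then have xV: "x \<in> V" "x \<notin> ?C" using x by auto
      have "proper_interval_graph (component V E x) (induced E (component V E x)) \<or> is_tree (component V E x) (induced E (component V E x))"
        using pt xV(1) unfolding propint_tree_graph_def Let_def by blast
      then show ?thesis using comp_old[OF sg inj dj v l1 xV] by simp
    qed
  qed
  show ?thesis using s1 s2 TV by simp
qed

end
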